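(* Let $G=(V,F,E)$ be a factor tree, i.e. a connected bipartite graph without cycles whose vertex set is partitioned into variable nodes $V=\{1,\dots,J\}$ and factor nodes $F$, with every edge joining a variable node to a factor node. For $j\in V$ let $N(j)\subset F$ be its set of neighbouring factor nodes and $N_j=|N(j)|$; for $\alpha\in F$ let $N(\alpha)\subset V$ be its set of neighbouring variable nodes. Each variable node $j$ carries a discrete variable $x_j$ taking $d_j$ values, and for $\alpha\in F$ write $\mathbf{x}_\alpha=(x_j)_{j\in N(\alpha)}$. Let $\epsilon>0$, let $C_\alpha(\mathbf{x}_\alpha)\in\mathbb{R}$ be given cost functions for $\alpha\in F$, and set $K_\alpha(\mathbf{x}_\alpha)=\exp(-C_\alpha(\mathbf{x}_\alpha)/\epsilon)$. Let $\Gamma\subset V$ be a set of leaf variable nodes (nodes $j$ with $N_j=1$), and for each $j\in\Gamma$ let $\boldsymbol\mu_j$ be a given probability vector on the values of $x_j$. Consider the optimization problem over nonnegative local marginals $\mathbf{B}=\{\mathbf{B}_j,\mathbf{B}_\alpha: j\in V,\alpha\in F\}$: $$\min_{\mathbf{B}}\ \sum_{\alpha\in F}\sum_{\mathbf{x}_\alpha}B_\alpha(\mathbf{x}_\alpha)C_\alpha(\mathbf{x}_\alpha)+\epsilon\sum_{\alpha\in F}\sum_{\mathbf{x}_\alpha}B_\alpha(\mathbf{x}_\alpha)\ln B_\alpha(\mathbf{x}_\alpha)-\epsilon\sum_{j\in V}(N_j-1)\sum_{x_j}B_j(x_j)\ln B_j(x_j)$$ subject to $B_j(x_j)=\mu_j(x_j)$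 for all $j\in\Gamma$ and all $x_j$; $\sum_{\mathbf{x}_\alpha\setminus x_j}B_\alpha(\mathbf{x}_\alpha)=B_j(x_j)$ for all $j\in V$, $\alpha\in N(j)$, and all $x_j$; and $\sum_{\mathbf{x}_\alpha}B_\alpha(\mathbf{x}_\alpha)=1$ for all $\alpha\in F$. Then the solution of this problem is given by $$B_\alpha(\mathbf{x}_\alpha)\propto K_\alpha(\mathbf{x}_\alpha)\prod_{j\in N(\alpha)}n_{j\to\alpha}(x_j)\ \ (\alpha\in F),\qquad B_j(x_j)\propto\prod_{\alpha\in N(j)}m_{\alpha\to j}(x_j)\ \ (j\notin\Gamma),\qquad B_j(x_j)=\mu_j(x_j)\ \ (j\in\Gamma),$$ where the messages $m_{\alpha\to j},n_{j\to\alpha}$ are fixed points of the iterations $$m_{\alpha\to j}(x_j)\propto\sum_{\mathbf{x}_\alpha\setminus x_j}K_\alpha(\mathbf{x}_\alpha)\prod_{i\in N(\alpha)\setminus j}n_{i\to\alpha}(x_i)\quad(j\in V,\ \alpha\in N(j)),$$ $$n_{j\to\alpha}(x_j)\propto\prod_{\beta\in N(j)\setminus\alpha}m_{\beta\to j}(x_j)\quad(j\notin\Gamma,\ \alpha\in N(j)),$$ $$n_{j\to\alpha}(x_j)\propto\mu_j(x_j)\,\big(m_{\alpha\to j}(x_j)\big)^{-1}\quad(j\in\Gamma,\ \alpha\in N(j)).$$ Here $\propto$ means equality up to a positive normalizing constant.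
   Context: The notation $\sum_{\mathbf{x}_\alpha\setminus x_j}$ denotes summation over all variables $x_i$, $i\in N(\alpha)\setminus\{j\}$, with $x_j$ held fixed; an empty product equals $1$. The objective is the (scaled) Bethe free energy associated with the entropy-regularized multi-marginal optimal transport problem whose cost tensor decomposes as $C(\mathbf{x})=\sum_{\alpha\in F}C_\alpha(\mathbf{x}_\alpha)$ over the factor tree. *)

theory Defs
  imports Complex_Main "HOL-Library.FuncSet"
begin

definition fg_nodes :: "'v set \<Rightarrow> 'f set \<Rightarrow> ('v + 'f) set" where
  "fg_nodes V F = Inl ` V \<union> Inr ` F"

definition fg_adj :: "('v \<times> 'f) set \<Rightarrow> 'v + 'f \<Rightarrow> 'v + 'f \<Rightarrow> bool" where
  "fg_adj E u w \<longleftrightarrow> (\<exists>j \<alpha>. (j, \<alpha>) \<in> E \<and>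
      ((u = Inl j \<and> w = Inr \<alpha>) \<or> (u = Inr \<alpha> \<and> w = Inl j)))"

definition fg_connected :: "'v set \<Rightarrow> 'f set \<Rightarrow> ('v \<times> 'f) set \<Rightarrow> bool" where
  "fg_connected V F E \<longleftrightarrow>
     (\<forall>u \<in> fg_nodes V F. \<forall>w \<in> fg_nodes V F. (u, w) \<in> {(a, b). fg_adj E a b}\<^sup>*)"

definition fg_acyclic :: "('v \<times> 'f) set \<Rightarrow> bool" where
  "fg_acyclic E \<longleftrightarrow> \<not> (\<exists>cs. length cs \<ge> 3 \<and> distinct cs \<and>
      (\<forall>i < length cs. fg_adj E (cs ! i) (cs ! ((i + 1) mod length cs))))"

definition factor_tree :: "'v set \<Rightarrow> 'f set \<Rightarrow> ('v \<times> 'f) set \<Rightarrow> bool" where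
  "factor_tree V F E \<longleftrightarrow> finite V \<and> finite F \<and> E \<subseteq> V \<times> F \<and>
     fg_connected V F E \<and> fg_acyclic E"

definition nbF :: "'f set \<Rightarrow> ('v \<times> 'f) set \<Rightarrow> 'v \<Rightarrow> 'f set" where
  "nbF F E j = {\<alpha> \<in> F. (j, \<alpha>) \<in> E}"

definition nbV :: "'v set \<Rightarrow> ('v \<times> 'f) set \<Rightarrow> 'f \<Rightarrow> 'v set" where
  "nbV V E \<alpha> = {j \<in> V. (j, \<alpha>) \<in> E}"

definition configs :: "'v set \<Rightarrow> ('v \<times> 'f) set \<Rightarrow> ('v \<Rightarrow> nat) \<Rightarrow> 'f \<Rightarrow> ('v \<Rightarrow> nat) set" where
  "configs V E d \<alpha> = (\<Pi>\<^sub>E i \<in> nbV V E \<alpha>. {..<d i})"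

text \<open>Configurations of alpha with x_j held fixed at value a (summation over x_alpha \ x_j).\<close>
definition configs_fix ::
  "'v set \<Rightarrow> ('v \<times> 'f) set \<Rightarrow> ('v \<Rightarrow> nat) \<Rightarrow> 'f \<Rightarrow> 'v \<Rightarrow> nat \<Rightarrow> ('v \<Rightarrow> nat) set" where
  "configs_fix V E d \<alpha> j a = {x \<in> configs V E d \<alpha>. x j = a}"

definition xlnx :: "real \<Rightarrow> real" where
  "xlnx t = (if t = 0 then 0 else t * ln t)"

definition bethe ::
  "'v set \<Rightarrow> 'f set \<Rightarrow> ('v \<times> 'f) set \<Rightarrow> ('v \<Rightarrow> nat) \<Rightarrow> real \<Rightarrow>
   ('f \<Rightarrow> ('v \<Rightarrow> nat) \<Rightarrow> real) \<Rightarrow>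
   ('v \<Rightarrow> nat \<Rightarrow> real) \<Rightarrow> ('f \<Rightarrow> ('v \<Rightarrow> nat) \<Rightarrow> real) \<Rightarrow> real" where
  "bethe V F E d \<epsilon> C Bv Bf =
     (\<Sum>\<alpha>\<in>F. \<Sum>x\<in>configs V E d \<alpha>. Bf \<alpha> x * C \<alpha> x)
     + \<epsilon> * (\<Sum>\<alpha>\<in>F. \<Sum>x\<in>configs V E d \<alpha>. xlnx (Bf \<alpha> x))
     - \<epsilon> * (\<Sum>j\<in>V. (real (card (nbF F E j)) - 1) * (\<Sum>a<d j. xlnx (Bv j a)))"

definition feasible ::
  "'v set \<Rightarrow> 'f set \<Rightarrow> ('v \<times> 'f) set \<Rightarrow> ('v \<Rightarrow> nat) \<Rightarrow> 'v set \<Rightarrow> ('v \<Rightarrow> nat \<Rightarrow> real) \<Rightarrow>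
   ('v \<Rightarrow> nat \<Rightarrow> real) \<Rightarrow> ('f \<Rightarrow> ('v \<Rightarrow> nat) \<Rightarrow> real) \<Rightarrow> bool" where
  "feasible V F E d \<Gamma> \<mu> Bv Bf \<longleftrightarrow>
     (\<forall>j\<in>V. \<forall>a<d j. Bv j a \<ge> 0) \<and>
     (\<forall>\<alpha>\<in>F. \<forall>x\<in>configs V E d \<alpha>. Bf \<alpha> x \<ge> 0) \<and>
     (\<forall>j\<in>\<Gamma>. \<forall>a<d j. Bv j a = \<mu> j a) \<and>
     (\<forall>j\<in>V. \<forall>\<alpha>\<in>nbF F E j. \<forall>a<d j. (\<Sum>x\<in>configs_fix V E d \<alpha> j a. Bf \<alpha> x) = Bv j a) \<and>
     (\<forall>\<alpha>\<in>F. (\<Sum>x\<in>configs V E d \<alpha>. Bf \<alpha> x) = 1)"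

text \<open>m alpha j a = m_{alpha -> j}(a), n j alpha a = n_{j -> alpha}(a).
  K alpha x = exp(- C alpha x / epsilon).\<close>

definition bp_factor_belief ::
  "'v set \<Rightarrow> ('v \<times> 'f) set \<Rightarrow> ('v \<Rightarrow> nat) \<Rightarrow> real \<Rightarrow> ('f \<Rightarrow> ('v \<Rightarrow> nat) \<Rightarrow> real) \<Rightarrow>
   ('v \<Rightarrow> 'f \<Rightarrow> nat \<Rightarrow> real) \<Rightarrow> 'f \<Rightarrow> ('v \<Rightarrow> nat) \<Rightarrow> real" where
  "bp_factor_belief V E d \<epsilon> C n \<alpha> x =
     (let w = (\<lambda>y. exp (- C \<alpha> y / \<epsilon>) * (\<Prod>j\<in>nbV V E \<alpha>. n j \<alpha> (y j)))
      in w x / (\<Sum>y\<in>configs V E d \<alpha>. w y))"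

definition bp_var_belief ::
  "'f set \<Rightarrow> ('v \<times> 'f) set \<Rightarrow> ('v \<Rightarrow> nat) \<Rightarrow> 'v set \<Rightarrow> ('v \<Rightarrow> nat \<Rightarrow> real) \<Rightarrow>
   ('f \<Rightarrow> 'v \<Rightarrow> nat \<Rightarrow> real) \<Rightarrow> 'v \<Rightarrow> nat \<Rightarrow> real" where
  "bp_var_belief F E d \<Gamma> \<mu> m j a =
     (if j \<in> \<Gamma> then \<mu> j a
      else (\<Prod>\<alpha>\<in>nbF F E j. m \<alpha> j a) / (\<Sum>b<d j. \<Prod>\<alpha>\<in>nbF F E j. m \<alpha> j b))"

end

theory Submission
  imports Defs
begin


definition isp :: "('v \<times> 'f) set \<Rightarrow> ('v + 'f) list \<Rightarrow> bool" where
  "isp E p \<longleftrightarrow> distinct p \<and> (\<forall>i. Suc i < length p \<longrightarrow> fg_adj E (p!i) (p!Suc i))"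

definition fgN :: "('v \<times> 'f) set \<Rightarrow> ('v + 'f) set" where
  "fgN E = Inl ` fst ` E \<union> Inr ` snd ` E"

lemma adj_N: "fg_adj E u w \<Longrightarrow> u \<in> fgN E \<and> w \<in> fgN E"
  unfolding fg_adj_def fgN_def by (force)

lemma adj_sym: "fg_adj E u w \<Longrightarrow> fg_adj E w u"
  unfolding fg_adj_def by blast

lemma adj_irrefl: "\<not> fg_adj E u u"
  unfolding fg_adj_def by blast

lemma finite_fgN: "finite E \<Longrightarrow> finite (fgN E)"
  unfolding fgN_def by simp

lemma isp_N: assumes "isp E p" "length p \<ge> 2" shows "set p \<subseteq> fgN E"
proof
  fix x assume "x \<in> set p"
  then obtain k where k: "k < length p" "p!k = x" by (auto simp: in_set_conv_nth)
  show "x \<in> fgN E"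
  proof (cases "Suc k < length p")
    case True
    then show ?thesis using assms(1) k adj_N unfolding isp_def by metis
  next
    case False
    then have "k = Suc (k - 1)" "Suc (k-1) < length p" using k assms(2) by auto
    then show ?thesis using assms(1) k adj_N unfolding isp_def by metis
  qed
qed

lemma isp_len: assumes "finite E" "isp E p" "length p \<ge> 2" shows "length p \<le> card (fgN E)"
proof -
  have "length p = card (set p)" using assms(2) distinct_card unfolding isp_def by metis
  also have "\<dots> \<le> card (fgN E)" using isp_N[OF assms(2,3)] finite_fgN[OF assms(1)] card_mono by blast
  finally show ?thesis .
qed

lemma acyclic_mono: "E' \<subseteq> E \<Longrightarrow> fg_acyclic E \<Longrightarrow> fg_acyclic E'"
proof -
  assume "E' \<subseteq> E" "fg_acyclic E"
  have "fg_adj E' u w \<Longrightarrow> fg_adj E u w" for u w using \<open>E' \<subseteq> E\<close> unfolding fg_adj_def by blast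
  then show ?thesis using \<open>fg_acyclic E\<close> unfolding fg_acyclic_def by meson
qed

lemma leaf:
  assumes fin: "finite E" and ne: "E \<noteq> {}" and acyc: "fg_acyclic E"
  shows "\<exists>j \<alpha>. (j,\<alpha>)\<in>E \<and> ((\<forall>\<beta>. (j,\<beta>)\<in>E \<longrightarrow> \<beta>=\<alpha>) \<or> (\<forall>i. (i,\<alpha>)\<in>E \<longrightarrow> i=j))"
proof -
  define L where "L = {length p | p. isp E p \<and> length p \<ge> 2}"
  obtain j0 \<alpha>0 where e0: "(j0,\<alpha>0) \<in> E" using ne by auto
  have "isp E [Inl j0, Inr \<alpha>0]" unfolding isp_def fg_adj_def using e0 by auto
  then have "2 \<in> L" unfolding L_def by force
  have Lb: "L \<subseteq> {..card (fgN E)}" unfolding L_def using isp_len[OF fin] by auto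
  then have finL: "finite L" using finite_subset by blast
  have "Max L \<in> L" using finL \<open>2 \<in> L\<close> Max_in by blast
  then obtain p where p: "isp E p" "length p \<ge> 2" "length p = Max L" unfolding L_def by auto
  define u where "u = p ! (length p - 1)"
  define v where "v = p ! (length p - 2)"
  have uv: "fg_adj E v u"
  proof -
    have "Suc (length p - 2) < length p" "Suc (length p - 2) = length p - 1" using p(2) by auto
    then show ?thesis using p(1) unfolding isp_def u_def v_def by metis
  qed
  have allv: "w = v" if wa: "fg_adj E u w" for w
  proof (rule ccontr)
    assume wv: "w \<noteq> v"
    show False
    proof (cases "w \<in> set p")
      case False
      have "isp E (p @ [w])"
        unfolding isp_def
      proof (intro conjI allI impI)
        show "distinct (p @ [w])" using False p(1) unfolding isp_def by auto
      next
        fix i assume i: "Suc i < length (p @ [w])"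
        show "fg_adj E ((p @ [w]) ! i) ((p @ [w]) ! Suc i)"
        proof (cases "Suc i < length p")
          case True
          then show ?thesis using p(1) unfolding isp_def by (simp add: nth_append)
        next
          case False
          then have "i = length p - 1" using i by auto
          then have "(p @ [w]) ! i = p ! (length p - 1)" "(p @ [w]) ! Suc i = w"
            using p(2) by (auto simp: nth_append)
          then show ?thesis using wa unfolding u_def by simp
        qed
      qed
      then have "length (p @ [w]) \<in> L" unfolding L_def using p(2) by force
      then have "length (p @ [w]) \<le> Max L" using finL by auto
      then show False using p(3) by simp
    next
      case True
      then obtain i where i: "i < length p" "p ! i = w" by (auto simp: in_set_conv_nth)
      have "i \<noteq> length p - 1" using i wa adj_irrefl unfolding u_def by metis
      moreover have "i \<noteq> length p - 2" using i wv unfolding v_def by auto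
      ultimately have i3: "i + 3 \<le> length p" using i(1) by linarith
      define cs where "cs = drop i p"
      have lcs: "length cs = length p - i" unfolding cs_def by simp
      have "length cs \<ge> 3" "distinct cs" using i3 p(1) unfolding cs_def isp_def by auto
      moreover have "\<forall>t < length cs. fg_adj E (cs ! t) (cs ! ((t + 1) mod length cs))"
      proof (intro allI impI)
        fix t assume t: "t < length cs"
        show "fg_adj E (cs ! t) (cs ! ((t + 1) mod length cs))"
        proof (cases "Suc t < length cs")
          case True
          then have "(t+1) mod length cs = Suc t" by simp
          moreover have "Suc (i + t) < length p" using True lcs by simp
          ultimately show ?thesis using p(1) unfolding isp_def cs_def
            by (simp add: nth_drop i(1) less_imp_le)
        next
          case False
          then have tt: "t = length cs - 1" using t by simp
          then have "t + 1 = length cs" using t by simp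
          then have "(t+1) mod length cs = 0" by simp
          moreover have "cs ! t = u" using tt lcs i3 unfolding cs_def u_def by (simp add: nth_drop)
          moreover have "cs ! 0 = w" using i unfolding cs_def by (simp add: nth_drop)
          ultimately show ?thesis using wa by simp
        qed
      qed
      ultimately show False using acyc unfolding fg_acyclic_def by blast
    qed
  qed
  show ?thesis
  proof (cases u)
    case (Inl j)
    obtain \<alpha> where va: "v = Inr \<alpha>" "(j,\<alpha>) \<in> E" using uv Inl unfolding fg_adj_def by auto
    have "\<forall>\<beta>. (j,\<beta>)\<in>E \<longrightarrow> \<beta>=\<alpha>"
    proof (intro allI impI)
      fix \<beta> assume "(j,\<beta>) \<in> E"
      then have "fg_adj E u (Inr \<beta>)" using Inl unfolding fg_adj_def by auto
      then show "\<beta> = \<alpha>" using allv va by auto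
    qed
    then show ?thesis using va by blast
  next
    case (Inr \<alpha>)
    obtain j where va: "v = Inl j" "(j,\<alpha>) \<in> E" using uv Inr unfolding fg_adj_def by auto
    have "\<forall>i. (i,\<alpha>)\<in>E \<longrightarrow> i=j"
    proof (intro allI impI)
      fix i assume "(i,\<alpha>) \<in> E"
      then have "fg_adj E u (Inl i)" using Inr unfolding fg_adj_def by auto
      then show "i = j" using allv va by auto
    qed
    then show ?thesis using va by blast
  qed
qed

lemma tree_S:
  assumes "finite E" "fg_acyclic E"
  shows "\<exists>S\<subseteq>E. (\<forall>\<alpha> j j'. (j,\<alpha>)\<in>S \<longrightarrow> (j',\<alpha>)\<in>S \<longrightarrow> j=j') \<and>
                 (\<forall>j \<alpha> \<alpha>'. (j,\<alpha>)\<in>E-S \<longrightarrow> (j,\<alpha>')\<in>E-S \<longrightarrow> \<alpha>=\<alpha>')"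
  using assms
proof (induction "card E" arbitrary: E rule: less_induct)
  case less
  show ?case
  proof (cases "E = {}")
    case True
    then show ?thesis by auto
  next
    case False
    obtain j \<alpha> where e: "(j,\<alpha>)\<in>E" and lf: "(\<forall>\<beta>. (j,\<beta>)\<in>E \<longrightarrow> \<beta>=\<alpha>) \<or> (\<forall>i. (i,\<alpha>)\<in>E \<longrightarrow> i=j)"
      using leaf[OF less.prems(1) False less.prems(2)] by blast
    define E' where "E' = E - {(j,\<alpha>)}"
    have "card E' < card E" unfolding E'_def using e less.prems(1) by (metis card_Diff1_less)
    moreover have "finite E'" using less.prems(1) unfolding E'_def by simp
    moreover have "fg_acyclic E'" unfolding E'_def using less.prems(2) acyclic_mono[of "E - {(j,\<alpha>)}" E] by blast
    ultimately obtain S' where S': "S' \<subseteq> E'" "\<forall>\<alpha> j j'. (j,\<alpha>)\<in>S' \<longrightarrow> (j',\<alpha>)\<in>S' \<longrightarrow> j=j'"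
       "\<forall>j \<alpha> \<alpha>'. (j,\<alpha>)\<in>E'-S' \<longrightarrow> (j,\<alpha>')\<in>E'-S' \<longrightarrow> \<alpha>=\<alpha>'"
      using less.hyps[of E'] by auto
    show ?thesis
    proof (cases "\<forall>\<beta>. (j,\<beta>)\<in>E \<longrightarrow> \<beta>=\<alpha>")
      case True
      have "S' \<subseteq> E" using S'(1) unfolding E'_def by blast
      moreover have "\<alpha>1 = \<alpha>2" if "(j1,\<alpha>1)\<in>E-S'" "(j1,\<alpha>2)\<in>E-S'" for j1 \<alpha>1 \<alpha>2
      proof (cases "j1 = j")
        case True
        then show ?thesis using that \<open>\<forall>\<beta>. (j,\<beta>)\<in>E \<longrightarrow> \<beta>=\<alpha>\<close> by blast
      next
        case False
        then have "(j1,\<alpha>1)\<in>E'-S'" "(j1,\<alpha>2)\<in>E'-S'" using that unfolding E'_def by auto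
        then show ?thesis using S'(3) by blast
      qed
      ultimately show ?thesis using S'(2) by blast
    next
      case False
      then have lf2: "\<forall>i. (i,\<alpha>)\<in>E \<longrightarrow> i=j" using lf by blast
      have "insert (j,\<alpha>) S' \<subseteq> E" using S'(1) e unfolding E'_def by blast
      moreover have "E - insert (j,\<alpha>) S' = E' - S'" unfolding E'_def by blast
      moreover have "j1 = j2" if "(j1,\<beta>)\<in>insert (j,\<alpha>) S'" "(j2,\<beta>)\<in>insert (j,\<alpha>) S'" for j1 j2 \<beta>
      proof (cases "\<beta> = \<alpha>")
        case True
        have "(j1,\<beta>) \<in> E" "(j2,\<beta>) \<in> E" using that S'(1) e unfolding E'_def by auto
        then show ?thesis using lf2 True by blast
      next
        case False
        then have "(j1,\<beta>)\<in>S'" "(j2,\<beta>)\<in>S'" using that by auto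
        then show ?thesis using S'(2) by blast
      qed
      ultimately show ?thesis using S'(3) by (metis (no_types, lifting))
    qed
  qed
qed




lemma ln_ge_1_minus_inv: "0 < y \<Longrightarrow> 1 - 1 / y \<le> ln (y::real)"
proof -
  assume y: "0 < y"
  have "ln (1/y) \<le> 1/y - 1" using y by (intro ln_le_minus_one) simp
  moreover have "ln (1/y) = - ln y" using y by (simp add: ln_div)
  ultimately show ?thesis by simp
qed

lemma log_sum_term:
  fixes p q P Q :: real
  assumes "p \<ge> 0" "q \<ge> 0" "p > 0 \<longrightarrow> q > 0" "P > 0" "Q > 0"
  shows "p - q * P / Q \<le> p * ln (p / q) - p * ln (P / Q)"
proof (cases "p = 0")
  case True
  then show ?thesis using assms by simp
next
  case False
  then have p: "p > 0" using assms by simp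
  then have q: "q > 0" using assms by simp
  define y where "y = (p * Q) / (q * P)"
  have y: "y > 0" unfolding y_def using p q assms by simp
  have "ln (p / q) - ln (P / Q) = ln y" unfolding y_def using p q assms
    by (simp add: ln_div ln_mult)
  moreover have "1 - 1 / y \<le> ln y" using ln_ge_1_minus_inv y by blast
  moreover have "p * (1 - 1 / y) = p - q * P / Q" unfolding y_def using p q assms
    by (simp add: field_simps)
  ultimately have "p - q * P / Q \<le> p * (ln (p / q) - ln (P / Q))"
    using p by (metis mult_left_mono less_imp_le)
  then show ?thesis by (simp add: right_diff_distrib)
qed

lemma log_sum:
  fixes p q :: "'a \<Rightarrow> real"
  assumes A: "finite A" and pn: "\<forall>i\<in>A. p i \<ge> 0" and qn: "\<forall>i\<in>A. q i \<ge> 0"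
    and pq: "\<forall>i\<in>A. p i > 0 \<longrightarrow> q i > 0"
  shows "sum p A * ln (sum p A / sum q A) \<le> (\<Sum>i\<in>A. p i * ln (p i / q i))"
proof (cases "sum p A = 0")
  case True
  then have "\<forall>i\<in>A. p i = 0" using sum_nonneg_eq_0_iff[OF A] pn by blast
  then show ?thesis using True by simp
next
  case False
  have P: "sum p A > 0" using False sum_nonneg[of A p] pn by force
  then obtain i where i: "i \<in> A" "p i > 0" using pn by (metis less_le sum_nonneg_eq_0_iff[OF A])
  then have "q i > 0" using pq by blast
  moreover have "q i \<le> sum q A" using A i(1) qn by (intro member_le_sum) auto
  ultimately have Q: "sum q A > 0" by simp
  have "(\<Sum>i\<in>A. p i - q i * sum p A / sum q A) \<le> (\<Sum>i\<in>A. p i * ln (p i / q i) - p i * ln (sum p A / sum q A))"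
    using log_sum_term pn qn pq P Q by (intro sum_mono) auto
  moreover have "(\<Sum>i\<in>A. p i - q i * sum p A / sum q A) = 0"
    using Q by (simp add: sum_subtractf sum_divide_distrib[symmetric] sum_distrib_right[symmetric])
  moreover have "(\<Sum>i\<in>A. p i * ln (p i / q i) - p i * ln (sum p A / sum q A)) =
      (\<Sum>i\<in>A. p i * ln (p i / q i)) - sum p A * ln (sum p A / sum q A)"
    by (simp add: sum_subtractf sum_distrib_right)
  ultimately show ?thesis by simp
qed




locale bp =
  fixes V :: "'v set" and F :: "'f set" and E :: "('v \<times> 'f) set"
    and d :: "'v \<Rightarrow> nat" and \<epsilon> :: real
    and C :: "'f \<Rightarrow> ('v \<Rightarrow> nat) \<Rightarrow> real"
    and \<Gamma> :: "'v set" and \<mu> :: "'v \<Rightarrow> nat \<Rightarrow> real"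
    and m :: "'f \<Rightarrow> 'v \<Rightarrow> nat \<Rightarrow> real" and n :: "'v \<Rightarrow> 'f \<Rightarrow> nat \<Rightarrow> real"
  assumes tree: "factor_tree V F E"
    and F_ne: "F \<noteq> {}"
    and d_pos: "\<forall>j\<in>V. d j > 0"
    and eps: "\<epsilon> > 0"
    and Gamma_sub: "\<Gamma> \<subseteq> V"
    and Gamma_leaf: "\<forall>j\<in>\<Gamma>. card (nbF F E j) = 1"
    and mu_nonneg: "\<forall>j\<in>\<Gamma>. \<forall>a<d j. \<mu> j a \<ge> 0"
    and mu_sum: "\<forall>j\<in>\<Gamma>. (\<Sum>a<d j. \<mu> j a) = 1"
    and m_pos: "\<forall>(j, \<alpha>)\<in>E. \<forall>a<d j. m \<alpha> j a > 0"
    and n_nonneg: "\<forall>(j, \<alpha>)\<in>E. \<forall>a<d j. n j \<alpha> a \<ge> 0"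
    and fix_m: "\<forall>(j, \<alpha>)\<in>E. \<exists>c>0. \<forall>a<d j.
        m \<alpha> j a = c * (\<Sum>x\<in>configs_fix V E d \<alpha> j a.
                          exp (- C \<alpha> x / \<epsilon>) * (\<Prod>i\<in>nbV V E \<alpha> - {j}. n i \<alpha> (x i)))"
    and fix_n: "\<forall>(j, \<alpha>)\<in>E. j \<notin> \<Gamma> \<longrightarrow> (\<exists>c>0. \<forall>a<d j.
        n j \<alpha> a = c * (\<Prod>\<beta>\<in>nbF F E j - {\<alpha>}. m \<beta> j a))"
    and fix_n_Gamma: "\<forall>(j, \<alpha>)\<in>E. j \<in> \<Gamma> \<longrightarrow> (\<exists>c>0. \<forall>a<d j.
        n j \<alpha> a = c * (\<mu> j a * inverse (m \<alpha> j a)))"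
begin

definition w where "w \<alpha> x = exp (- C \<alpha> x / \<epsilon>) * (\<Prod>j\<in>nbV V E \<alpha>. n j \<alpha> (x j))"
definition Z where "Z \<alpha> = (\<Sum>y\<in>configs V E d \<alpha>. w \<alpha> y)"
definition P where "P j a = (\<Prod>\<alpha>\<in>nbF F E j. m \<alpha> j a)"
definition SP where "SP j = (\<Sum>b<d j. P j b)"

abbreviation bfs where "bfs \<equiv> bp_factor_belief V E d \<epsilon> C n"
abbreviation bvs where "bvs \<equiv> bp_var_belief F E d \<Gamma> \<mu> m"

lemma bfs_eq: "bfs \<alpha> x = w \<alpha> x / Z \<alpha>"
  by (simp add: bp_factor_belief_def w_def Z_def Let_def)

lemma bvs_eq: "bvs j a = (if j \<in> \<Gamma> then \<mu> j a else P j a / SP j)"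
  by (simp add: bp_var_belief_def P_def SP_def)

definition cm where "cm j \<alpha> = (SOME c. c>0 \<and> (\<forall>a<d j.
        m \<alpha> j a = c * (\<Sum>x\<in>configs_fix V E d \<alpha> j a.
                          exp (- C \<alpha> x / \<epsilon>) * (\<Prod>i\<in>nbV V E \<alpha> - {j}. n i \<alpha> (x i)))))"

lemma cm: assumes "(j,\<alpha>) \<in> E"
  shows "cm j \<alpha> > 0" "a < d j \<Longrightarrow> m \<alpha> j a = cm j \<alpha> * (\<Sum>x\<in>configs_fix V E d \<alpha> j a.
                          exp (- C \<alpha> x / \<epsilon>) * (\<Prod>i\<in>nbV V E \<alpha> - {j}. n i \<alpha> (x i)))"
proof -
  have ex: "\<exists>c. c>0 \<and> (\<forall>a<d j.
        m \<alpha> j a = c * (\<Sum>x\<in>configs_fix V E d \<alpha> j a.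
                          exp (- C \<alpha> x / \<epsilon>) * (\<Prod>i\<in>nbV V E \<alpha> - {j}. n i \<alpha> (x i))))"
    using fix_m assms by fast
  show "cm j \<alpha> > 0" using someI_ex[OF ex] unfolding cm_def by blast
  show "a < d j \<Longrightarrow> m \<alpha> j a = cm j \<alpha> * (\<Sum>x\<in>configs_fix V E d \<alpha> j a.
                          exp (- C \<alpha> x / \<epsilon>) * (\<Prod>i\<in>nbV V E \<alpha> - {j}. n i \<alpha> (x i)))"
    using someI_ex[OF ex] unfolding cm_def by blast
qed

definition cn where "cn j \<alpha> = (SOME c. c>0 \<and> (\<forall>a<d j.
        n j \<alpha> a = c * (if j \<in> \<Gamma> then \<mu> j a * inverse (m \<alpha> j a) else (\<Prod>\<beta>\<in>nbF F E j - {\<alpha>}. m \<beta> j a))))"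

lemma cn: assumes "(j,\<alpha>) \<in> E"
  shows "cn j \<alpha> > 0" "a < d j \<Longrightarrow> n j \<alpha> a = cn j \<alpha> *
      (if j \<in> \<Gamma> then \<mu> j a * inverse (m \<alpha> j a) else (\<Prod>\<beta>\<in>nbF F E j - {\<alpha>}. m \<beta> j a))"
proof -
  have ex: "\<exists>c. c>0 \<and> (\<forall>a<d j.
        n j \<alpha> a = c * (if j \<in> \<Gamma> then \<mu> j a * inverse (m \<alpha> j a) else (\<Prod>\<beta>\<in>nbF F E j - {\<alpha>}. m \<beta> j a)))"
  proof (cases "j \<in> \<Gamma>")
    case True
    then show ?thesis using fix_n_Gamma assms by fastforce
  next
    case False
    then show ?thesis using fix_n assms by fastforce
  qed
  show "cn j \<alpha> > 0" using someI_ex[OF ex] unfolding cn_def by blast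
  show "a < d j \<Longrightarrow> n j \<alpha> a = cn j \<alpha> *
      (if j \<in> \<Gamma> then \<mu> j a * inverse (m \<alpha> j a) else (\<Prod>\<beta>\<in>nbF F E j - {\<alpha>}. m \<beta> j a))"
    using someI_ex[OF ex] unfolding cn_def by blast
qed

lemma finV: "finite V" and finF: "finite F" and EVF: "E \<subseteq> V \<times> F" and finE: "finite E"
  using tree unfolding factor_tree_def by (auto intro: finite_subset)

lemma acyc: "fg_acyclic E" using tree unfolding factor_tree_def by blast

lemma fin_nbV: "finite (nbV V E \<alpha>)" unfolding nbV_def using finV by simp
lemma fin_nbF: "finite (nbF F E j)" unfolding nbF_def using finF by simp

lemma fin_configs: "finite (configs V E d \<alpha>)"
  unfolding configs_def using fin_nbV by (intro finite_PiE) auto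

lemma nbV_iff: "j \<in> nbV V E \<alpha> \<longleftrightarrow> (j,\<alpha>) \<in> E" unfolding nbV_def using EVF by auto
lemma nbF_iff: "\<alpha> \<in> nbF F E j \<longleftrightarrow> (j,\<alpha>) \<in> E" unfolding nbF_def using EVF by auto

lemma configs_range: "x \<in> configs V E d \<alpha> \<Longrightarrow> (j,\<alpha>) \<in> E \<Longrightarrow> x j < d j"
  unfolding configs_def using nbV_iff by (auto simp: PiE_iff)

lemma sum_configs_group:
  assumes "(j,\<alpha>) \<in> E"
  shows "(\<Sum>x\<in>configs V E d \<alpha>. f x) = (\<Sum>a<d j. \<Sum>x\<in>configs_fix V E d \<alpha> j a. f x)"
proof -
  have "(\<Sum>a<d j. sum f {x \<in> configs V E d \<alpha>. x j = a}) = sum f (configs V E d \<alpha>)"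
    using configs_range[OF _ assms] fin_configs by (intro sum.group) auto
  then show ?thesis unfolding configs_fix_def by simp
qed

lemma nbF_ne: assumes "j \<in> V" shows "nbF F E j \<noteq> {}"
proof -
  obtain \<alpha> where a: "\<alpha> \<in> F" using F_ne by blast
  have "(Inl j, Inr \<alpha>) \<in> {(a, b). fg_adj E a b}\<^sup>*"
    using tree assms a unfolding factor_tree_def fg_connected_def fg_nodes_def by blast
  then obtain y where "fg_adj E (Inl j) y"
    by (cases rule: converse_rtranclE) auto
  then obtain \<beta> where "(j,\<beta>) \<in> E" unfolding fg_adj_def by auto
  then show ?thesis using nbF_iff by blast
qed

lemma n_pos: "(j,\<alpha>) \<in> E \<Longrightarrow> j \<notin> \<Gamma> \<Longrightarrow> a < d j \<Longrightarrow> n j \<alpha> a > 0"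
proof -
  assume e: "(j,\<alpha>) \<in> E" and g: "j \<notin> \<Gamma>" and a: "a < d j"
  have "\<forall>\<beta>\<in>nbF F E j - {\<alpha>}. m \<beta> j a > 0" using m_pos a nbF_iff by blast
  then have "(\<Prod>\<beta>\<in>nbF F E j - {\<alpha>}. m \<beta> j a) > 0" by (intro prod_pos) auto
  then show ?thesis using cn[OF e] g a by simp
qed

lemma w_nonneg: "x \<in> configs V E d \<alpha> \<Longrightarrow> w \<alpha> x \<ge> 0"
  unfolding w_def using n_nonneg configs_range nbV_iff
  by (intro mult_nonneg_nonneg prod_nonneg) auto

lemma P_pos: "a < d j \<Longrightarrow> P j a > 0"
  unfolding P_def using m_pos nbF_iff by (intro prod_pos) auto

lemma SP_pos: "j \<in> V \<Longrightarrow> SP j > 0"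
  unfolding SP_def using P_pos d_pos by (intro sum_pos) auto

lemma card_Gamma: "j \<in> \<Gamma> \<Longrightarrow> real (card (nbF F E j)) - 1 = 0"
  using Gamma_leaf by simp

end


context bp begin

definition QQ where "QQ j a = (if j \<in> \<Gamma> then \<mu> j a else P j a)"
definition SQ where "SQ j = (\<Sum>a<d j. QQ j a)"

lemma SQ_pos: "j \<in> V \<Longrightarrow> SQ j > 0"
  using SP_pos mu_sum unfolding SQ_def QQ_def SP_def by (cases "j \<in> \<Gamma>") auto

lemma bvs_QQ: "a < d j \<Longrightarrow> bvs j a = QQ j a / SQ j"
  using mu_sum unfolding bvs_eq QQ_def SQ_def SP_def by auto

lemma w_marg: assumes e: "(j,\<alpha>) \<in> E" and a: "a < d j"
  shows "(\<Sum>x\<in>configs_fix V E d \<alpha> j a. w \<alpha> x) = n j \<alpha> a * m \<alpha> j a / cm j \<alpha>"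
proof -
  have jn: "j \<in> nbV V E \<alpha>" using e nbV_iff by blast
  have "w \<alpha> x = n j \<alpha> a * (exp (- C \<alpha> x / \<epsilon>) * (\<Prod>i\<in>nbV V E \<alpha> - {j}. n i \<alpha> (x i)))"
    if "x \<in> configs_fix V E d \<alpha> j a" for x
  proof -
    have "x j = a" using that unfolding configs_fix_def by simp
    then show ?thesis unfolding w_def using prod.remove[OF fin_nbV jn, of "\<lambda>i. n i \<alpha> (x i)"]
      by (simp add: algebra_simps)
  qed
  then have "(\<Sum>x\<in>configs_fix V E d \<alpha> j a. w \<alpha> x) = n j \<alpha> a * (\<Sum>x\<in>configs_fix V E d \<alpha> j a.
       exp (- C \<alpha> x / \<epsilon>) * (\<Prod>i\<in>nbV V E \<alpha> - {j}. n i \<alpha> (x i)))"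
    by (simp add: sum_distrib_left)
  also have "\<dots> = n j \<alpha> a * m \<alpha> j a / cm j \<alpha>" using cm[OF e] a by simp
  finally show ?thesis .
qed

lemma nm_prod: assumes e: "(j,\<alpha>) \<in> E" and a: "a < d j"
  shows "n j \<alpha> a * m \<alpha> j a = cn j \<alpha> * QQ j a"
proof (cases "j \<in> \<Gamma>")
  case True
  have "m \<alpha> j a > 0" using m_pos e a by blast
  then show ?thesis using cn(2)[OF e a] True unfolding QQ_def by simp
next
  case False
  have an: "\<alpha> \<in> nbF F E j" using e nbF_iff by blast
  show ?thesis using cn(2)[OF e a] False prod.remove[OF fin_nbF an, of "\<lambda>\<beta>. m \<beta> j a"]
    unfolding QQ_def P_def by (simp add: algebra_simps)
qed

lemma w_marg2: assumes e: "(j,\<alpha>) \<in> E" and a: "a < d j"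
  shows "(\<Sum>x\<in>configs_fix V E d \<alpha> j a. w \<alpha> x) = cn j \<alpha> / cm j \<alpha> * QQ j a"
  using w_marg[OF e a] nm_prod[OF e a] by simp

lemma Z_edge: assumes e: "(j,\<alpha>) \<in> E" shows "Z \<alpha> = cn j \<alpha> / cm j \<alpha> * SQ j"
proof -
  have "Z \<alpha> = (\<Sum>a<d j. \<Sum>x\<in>configs_fix V E d \<alpha> j a. w \<alpha> x)"
    unfolding Z_def using sum_configs_group[OF e] by blast
  also have "\<dots> = (\<Sum>a<d j. cn j \<alpha> / cm j \<alpha> * QQ j a)"
    using w_marg2[OF e] by (intro sum.cong) auto
  finally show ?thesis unfolding SQ_def by (simp add: sum_distrib_left)
qed

lemma Z_pos: assumes "\<alpha> \<in> F" shows "Z \<alpha> > 0"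
proof (cases "nbV V E \<alpha> = {}")
  case True
  then show ?thesis unfolding Z_def configs_def w_def by simp
next
  case False
  then obtain j where "j \<in> nbV V E \<alpha>" by blast
  then have e: "(j,\<alpha>) \<in> E" using nbV_iff by blast
  then have "j \<in> V" using EVF by blast
  then show ?thesis using Z_edge[OF e] cn(1)[OF e] cm(1)[OF e] SQ_pos by simp
qed

lemma bfs_marg: assumes e: "(j,\<alpha>) \<in> E" and a: "a < d j"
  shows "(\<Sum>x\<in>configs_fix V E d \<alpha> j a. bfs \<alpha> x) = bvs j a"
proof -
  have "(\<Sum>x\<in>configs_fix V E d \<alpha> j a. bfs \<alpha> x) = (\<Sum>x\<in>configs_fix V E d \<alpha> j a. w \<alpha> x) / Z \<alpha>"
    unfolding bfs_eq by (simp add: sum_divide_distrib)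
  also have "\<dots> = QQ j a / SQ j" using w_marg2[OF e a] Z_edge[OF e] cn(1)[OF e] cm(1)[OF e] by simp
  finally show ?thesis using bvs_QQ a by simp
qed

lemma bvs_nonneg: "j \<in> V \<Longrightarrow> a < d j \<Longrightarrow> bvs j a \<ge> 0"
  using mu_nonneg P_pos SP_pos unfolding bvs_eq by (auto intro: divide_nonneg_pos less_imp_le)

lemma bvs_pos: "j \<in> V \<Longrightarrow> j \<notin> \<Gamma> \<Longrightarrow> a < d j \<Longrightarrow> bvs j a > 0"
  using P_pos SP_pos unfolding bvs_eq by auto

lemma feasible_bp: "feasible V F E d \<Gamma> \<mu> bvs bfs"
  unfolding feasible_def
proof (intro conjI ballI allI impI)
  show "bvs j a \<ge> 0" if "j \<in> V" "a < d j" for j a using bvs_nonneg that by blast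
  show "bfs \<alpha> x \<ge> 0" if "\<alpha> \<in> F" "x \<in> configs V E d \<alpha>" for \<alpha> x
    using that w_nonneg Z_pos unfolding bfs_eq by (simp add: less_imp_le)
  show "bvs j a = \<mu> j a" if "j \<in> \<Gamma>" "a < d j" for j a using that unfolding bvs_eq by simp
  show "(\<Sum>x\<in>configs_fix V E d \<alpha> j a. bfs \<alpha> x) = bvs j a" if "j \<in> V" "\<alpha> \<in> nbF F E j" "a < d j" for j \<alpha> a
    using that bfs_marg nbF_iff by blast
  show "(\<Sum>x\<in>configs V E d \<alpha>. bfs \<alpha> x) = 1" if "\<alpha> \<in> F" for \<alpha>
    using Z_pos[OF that] unfolding bfs_eq Z_def by (simp add: sum_divide_distrib[symmetric])
qed

end


context bp begin

definition DF where "DF Bf \<alpha> = (\<Sum>x\<in>configs V E d \<alpha>. Bf \<alpha> x * ln (Bf \<alpha> x / bfs \<alpha> x))"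
definition DV where "DV Bv j = (\<Sum>a<d j. Bv j a * ln (Bv j a / bvs j a))"


lemma feasD:
  assumes fe: "feasible V F E d \<Gamma> \<mu> Bv Bf"
  shows feasD1: "j \<in> V \<Longrightarrow> a < d j \<Longrightarrow> Bv j a \<ge> 0"
    and feasD2: "\<alpha> \<in> F \<Longrightarrow> x \<in> configs V E d \<alpha> \<Longrightarrow> Bf \<alpha> x \<ge> 0"
    and feasD3: "j \<in> \<Gamma> \<Longrightarrow> a < d j \<Longrightarrow> Bv j a = \<mu> j a"
    and feasD4: "(j,\<alpha>) \<in> E \<Longrightarrow> a < d j \<Longrightarrow> (\<Sum>x\<in>configs_fix V E d \<alpha> j a. Bf \<alpha> x) = Bv j a"
    and feasD5: "\<alpha> \<in> F \<Longrightarrow> (\<Sum>x\<in>configs V E d \<alpha>. Bf \<alpha> x) = 1"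
proof -
  have f: "(\<forall>j\<in>V. \<forall>a<d j. Bv j a \<ge> 0)" "(\<forall>\<alpha>\<in>F. \<forall>x\<in>configs V E d \<alpha>. Bf \<alpha> x \<ge> 0)"
     "(\<forall>j\<in>\<Gamma>. \<forall>a<d j. Bv j a = \<mu> j a)"
     "(\<forall>j\<in>V. \<forall>\<alpha>\<in>nbF F E j. \<forall>a<d j. (\<Sum>x\<in>configs_fix V E d \<alpha> j a. Bf \<alpha> x) = Bv j a)"
     "(\<forall>\<alpha>\<in>F. (\<Sum>x\<in>configs V E d \<alpha>. Bf \<alpha> x) = 1)"
    using fe unfolding feasible_def by blast+
  show "j \<in> V \<Longrightarrow> a < d j \<Longrightarrow> Bv j a \<ge> 0" using f(1) by blast
  show "\<alpha> \<in> F \<Longrightarrow> x \<in> configs V E d \<alpha> \<Longrightarrow> Bf \<alpha> x \<ge> 0" using f(2) by blast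
  show "j \<in> \<Gamma> \<Longrightarrow> a < d j \<Longrightarrow> Bv j a = \<mu> j a" using f(3) by blast
  show "(j,\<alpha>) \<in> E \<Longrightarrow> a < d j \<Longrightarrow> (\<Sum>x\<in>configs_fix V E d \<alpha> j a. Bf \<alpha> x) = Bv j a"
  proof -
    assume e: "(j,\<alpha>) \<in> E" and a: "a < d j"
    have "j \<in> V" "\<alpha> \<in> nbF F E j" using e EVF nbF_iff by auto
    then show ?thesis using f(4) a by blast
  qed
  show "\<alpha> \<in> F \<Longrightarrow> (\<Sum>x\<in>configs V E d \<alpha>. Bf \<alpha> x) = 1" using f(5) by blast
qed

lemma feas_sumBv: assumes fe: "feasible V F E d \<Gamma> \<mu> Bv Bf" and j: "j \<in> V"
  shows "(\<Sum>a<d j. Bv j a) = 1"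
proof -
  obtain \<alpha> where a: "\<alpha> \<in> nbF F E j" using nbF_ne[OF j] by blast
  then have e: "(j,\<alpha>) \<in> E" and aF: "\<alpha> \<in> F" using nbF_iff EVF by auto
  have "(\<Sum>a<d j. Bv j a) = (\<Sum>a<d j. \<Sum>x\<in>configs_fix V E d \<alpha> j a. Bf \<alpha> x)"
    using feasD4[OF fe e] by (intro sum.cong) auto
  also have "\<dots> = (\<Sum>x\<in>configs V E d \<alpha>. Bf \<alpha> x)" by (rule sum_configs_group[OF e, symmetric])
  also have "\<dots> = 1" using feasD5[OF fe aF] .
  finally show ?thesis .
qed

lemma feas_support: assumes fe: "feasible V F E d \<Gamma> \<mu> Bv Bf" and aF: "\<alpha> \<in> F"
    and x: "x \<in> configs V E d \<alpha>" and pos: "Bf \<alpha> x > 0"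
  shows "w \<alpha> x > 0"
proof (rule ccontr)
  assume "\<not> w \<alpha> x > 0"
  then have "w \<alpha> x = 0" using w_nonneg[OF x] by simp
  then have "(\<Prod>j\<in>nbV V E \<alpha>. n j \<alpha> (x j)) = 0" unfolding w_def by simp
  then have "\<exists>i\<in>nbV V E \<alpha>. n i \<alpha> (x i) = 0" using prod_zero_iff[OF fin_nbV[of \<alpha>], of "\<lambda>j. n j \<alpha> (x j)"] by metis
  then obtain i where i: "i \<in> nbV V E \<alpha>" "n i \<alpha> (x i) = 0" by blast
  then have e: "(i,\<alpha>) \<in> E" using nbV_iff by blast
  have xi: "x i < d i" using configs_range[OF x e] .
  have iG: "i \<in> \<Gamma>"
  proof (rule ccontr)
    assume "i \<notin> \<Gamma>"
    then have "n i \<alpha> (x i) > 0" using n_pos[OF e _ xi] by blast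
    then show False using i(2) by simp
  qed
  have "m \<alpha> i (x i) > 0" using m_pos e xi by blast
  then have mu0: "\<mu> i (x i) = 0" using cn[OF e] xi iG i(2) by simp
  have iV: "i \<in> V" and ai: "\<alpha> \<in> nbF F E i" using e EVF nbF_iff by auto
  have "(\<Sum>y\<in>configs_fix V E d \<alpha> i (x i). Bf \<alpha> y) = 0"
    using feasD4[OF fe e xi] feasD3[OF fe iG xi] mu0 by simp
  moreover have "Bf \<alpha> x \<le> (\<Sum>y\<in>configs_fix V E d \<alpha> i (x i). Bf \<alpha> y)"
  proof (rule member_le_sum)
    show "x \<in> configs_fix V E d \<alpha> i (x i)" using x unfolding configs_fix_def by simp
    show "finite (configs_fix V E d \<alpha> i (x i))" using fin_configs unfolding configs_fix_def by simp
    show "\<And>y. y \<in> configs_fix V E d \<alpha> i (x i) - {x} \<Longrightarrow> 0 \<le> Bf \<alpha> y"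
      using feasD2[OF fe aF] unfolding configs_fix_def by auto
  qed
  ultimately show False using pos by simp
qed

lemma bfs_pos_support: assumes fe: "feasible V F E d \<Gamma> \<mu> Bv Bf" and aF: "\<alpha> \<in> F"
    and x: "x \<in> configs V E d \<alpha>" and pos: "Bf \<alpha> x > 0"
  shows "bfs \<alpha> x > 0"
  using feas_support[OF assms] Z_pos[OF aF] unfolding bfs_eq by simp

lemma DF_ge_DV: assumes fe: "feasible V F E d \<Gamma> \<mu> Bv Bf" and e: "(j,\<alpha>) \<in> E"
  shows "DV Bv j \<le> DF Bf \<alpha>"
proof -
  have aF: "\<alpha> \<in> F" and jV: "j \<in> V" and an: "\<alpha> \<in> nbF F E j" using e EVF nbF_iff by auto
  have fe2: "feasible V F E d \<Gamma> \<mu> bvs bfs" by (rule feasible_bp)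
  have "DV Bv j = (\<Sum>a<d j. (\<Sum>x\<in>configs_fix V E d \<alpha> j a. Bf \<alpha> x) *
      ln ((\<Sum>x\<in>configs_fix V E d \<alpha> j a. Bf \<alpha> x) / (\<Sum>x\<in>configs_fix V E d \<alpha> j a. bfs \<alpha> x)))"
    unfolding DV_def using feasD4[OF fe e] feasD4[OF fe2 e] by (intro sum.cong) auto
  also have "\<dots> \<le> (\<Sum>a<d j. \<Sum>x\<in>configs_fix V E d \<alpha> j a. Bf \<alpha> x * ln (Bf \<alpha> x / bfs \<alpha> x))"
  proof (intro sum_mono log_sum)
    fix a
    show "finite (configs_fix V E d \<alpha> j a)" using fin_configs unfolding configs_fix_def by simp
    show "\<forall>x\<in>configs_fix V E d \<alpha> j a. 0 \<le> Bf \<alpha> x" using feasD2[OF fe aF] unfolding configs_fix_def by auto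
    show "\<forall>x\<in>configs_fix V E d \<alpha> j a. 0 \<le> bfs \<alpha> x" using feasD2[OF fe2 aF] unfolding configs_fix_def by auto
    show "\<forall>x\<in>configs_fix V E d \<alpha> j a. 0 < Bf \<alpha> x \<longrightarrow> 0 < bfs \<alpha> x"
      using bfs_pos_support[OF fe aF] unfolding configs_fix_def by auto
  qed
  also have "\<dots> = DF Bf \<alpha>" unfolding DF_def by (rule sum_configs_group[OF e, symmetric])
  finally show ?thesis .
qed

lemma DV_nonneg: assumes fe: "feasible V F E d \<Gamma> \<mu> Bv Bf" and jV: "j \<in> V"
  shows "0 \<le> DV Bv j"
proof -
  have fe2: "feasible V F E d \<Gamma> \<mu> bvs bfs" by (rule feasible_bp)
  have "(\<Sum>a<d j. Bv j a) * ln ((\<Sum>a<d j. Bv j a) / (\<Sum>a<d j. bvs j a)) \<le> DV Bv j"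
    unfolding DV_def
  proof (intro log_sum)
    show "\<forall>a\<in>{..<d j}. 0 \<le> Bv j a" using feasD1[OF fe jV] by auto
    show "\<forall>a\<in>{..<d j}. 0 \<le> bvs j a" using bvs_nonneg jV by auto
    show "\<forall>a\<in>{..<d j}. 0 < Bv j a \<longrightarrow> 0 < bvs j a"
    proof (intro ballI impI)
      fix a assume a: "a \<in> {..<d j}" "0 < Bv j a"
      show "0 < bvs j a"
      proof (cases "j \<in> \<Gamma>")
        case True
        then show ?thesis using feasD3[OF fe True] a unfolding bvs_eq by auto
      next
        case False
        then show ?thesis using bvs_pos jV a by auto
      qed
    qed
  qed simp
  then show ?thesis using feas_sumBv[OF fe jV] feas_sumBv[OF fe2 jV] by simp
qed

lemma DF_nonneg: assumes fe: "feasible V F E d \<Gamma> \<mu> Bv Bf" and aF: "\<alpha> \<in> F"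
  shows "0 \<le> DF Bf \<alpha>"
proof -
  have fe2: "feasible V F E d \<Gamma> \<mu> bvs bfs" by (rule feasible_bp)
  have "(\<Sum>x\<in>configs V E d \<alpha>. Bf \<alpha> x) * ln ((\<Sum>x\<in>configs V E d \<alpha>. Bf \<alpha> x) / (\<Sum>x\<in>configs V E d \<alpha>. bfs \<alpha> x)) \<le> DF Bf \<alpha>"
    unfolding DF_def
  proof (intro log_sum)
    show "finite (configs V E d \<alpha>)" by (rule fin_configs)
    show "\<forall>x\<in>configs V E d \<alpha>. 0 \<le> Bf \<alpha> x" using feasD2[OF fe aF] by auto
    show "\<forall>x\<in>configs V E d \<alpha>. 0 \<le> bfs \<alpha> x" using feasD2[OF fe2 aF] by auto
    show "\<forall>x\<in>configs V E d \<alpha>. 0 < Bf \<alpha> x \<longrightarrow> 0 < bfs \<alpha> x"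
      using bfs_pos_support[OF fe aF] by auto
  qed
  then show ?thesis using feasD5[OF fe aF] feasD5[OF fe2 aF] by simp
qed

lemma DF_DV_ineq: assumes fe: "feasible V F E d \<Gamma> \<mu> Bv Bf"
  shows "(\<Sum>j\<in>V. (real (card (nbF F E j)) - 1) * DV Bv j) \<le> (\<Sum>\<alpha>\<in>F. DF Bf \<alpha>)"
proof -
  obtain S where S: "S \<subseteq> E" "\<forall>\<alpha> j j'. (j,\<alpha>)\<in>S \<longrightarrow> (j',\<alpha>)\<in>S \<longrightarrow> j=j'"
      "\<forall>j \<alpha> \<alpha>'. (j,\<alpha>)\<in>E-S \<longrightarrow> (j,\<alpha>')\<in>E-S \<longrightarrow> \<alpha>=\<alpha>'"
    using tree_S[OF finE acyc] by blast
  have step1: "(\<Sum>j\<in>{j\<in>V. (j,\<alpha>)\<in>S}. DV Bv j) \<le> DF Bf \<alpha>" if aF: "\<alpha> \<in> F" for \<alpha>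
  proof (cases "{j\<in>V. (j,\<alpha>)\<in>S} = {}")
    case True
    then show ?thesis using DF_nonneg[OF fe aF] by (simp only: sum.empty)
  next
    case False
    then obtain j where j: "j \<in> V" "(j,\<alpha>) \<in> S" by blast
    then have "{j\<in>V. (j,\<alpha>)\<in>S} = {j}" using S(2) by blast
    then show ?thesis using DF_ge_DV[OF fe] j S(1) by auto
  qed
  have step2: "(real (card (nbF F E j)) - 1) * DV Bv j \<le> (\<Sum>\<alpha>\<in>{\<alpha>\<in>F. (j,\<alpha>)\<in>S}. DV Bv j)" if jV: "j \<in> V" for j
  proof -
    define R where "R = {\<alpha>\<in>F. (j,\<alpha>) \<in> E - S}"
    have "finite R" unfolding R_def using finF by simp
    have "card R \<le> Suc 0" using card_le_Suc0_iff_eq[OF \<open>finite R\<close>] S(3) unfolding R_def by blast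
    then have "card R \<le> 1" by simp
    have "nbF F E j \<subseteq> {\<alpha>\<in>F. (j,\<alpha>)\<in>S} \<union> R" unfolding nbF_def R_def by blast
    then have "card (nbF F E j) \<le> card ({\<alpha>\<in>F. (j,\<alpha>)\<in>S} \<union> R)" using finF \<open>finite R\<close> by (intro card_mono) auto
    also have "\<dots> \<le> card {\<alpha>\<in>F. (j,\<alpha>)\<in>S} + card R" by (rule card_Un_le)
    finally have "real (card (nbF F E j)) - 1 \<le> real (card {\<alpha>\<in>F. (j,\<alpha>)\<in>S})" using \<open>card R \<le> 1\<close> by linarith
    then show ?thesis using DV_nonneg[OF fe jV] by (simp add: mult_right_mono)
  qed
  have "(\<Sum>j\<in>V. (real (card (nbF F E j)) - 1) * DV Bv j) \<le> (\<Sum>j\<in>V. \<Sum>\<alpha>\<in>{\<alpha>\<in>F. (j,\<alpha>)\<in>S}. DV Bv j)"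
    using step2 by (rule sum_mono)
  also have "\<dots> = (\<Sum>\<alpha>\<in>F. \<Sum>j\<in>{j\<in>V. (j,\<alpha>)\<in>S}. DV Bv j)"
    using finV finF by (rule sum.swap_restrict)
  also have "\<dots> \<le> (\<Sum>\<alpha>\<in>F. DF Bf \<alpha>)" using step1 by (rule sum_mono)
  finally show ?thesis .
qed

end


lemma alg_helper:
  fixes X e Y D Tt Zs W DVs Ls Tj B :: real
  shows "X + e*Y = e*(D + Tt - Zs) \<Longrightarrow> W = DVs + Ls \<Longrightarrow> Tt = Tj \<Longrightarrow> B = Tj - Ls - Zs
     \<Longrightarrow> X + e*Y - e*W = e*(D - DVs + B)"
proof -
  assume h1: "X + e*Y = e*(D + Tt - Zs)" and h2: "W = DVs + Ls" and h3: "Tt = Tj" and h4: "B = Tj - Ls - Zs"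
  have "e*(D - DVs + B) = e*(D + Tt - Zs) - e*W" unfolding h2 h3 h4 by (simp add: algebra_simps)
  then show ?thesis using h1 by linarith
qed

context bp begin

definition T where "T Bv \<alpha> i = (\<Sum>a<d i. Bv i a * ln (n i \<alpha> a))"
definition Qj where "Qj Bv j = (\<Sum>\<alpha>\<in>nbF F E j. T Bv \<alpha> j)
   - (real (card (nbF F E j)) - 1) * (\<Sum>a<d j. Bv j a * ln (bvs j a))"
definition kap where "kap j = (\<Sum>\<alpha>\<in>nbF F E j. ln (cn j \<alpha>)) + (real (card (nbF F E j)) - 1) * ln (SP j)"
definition Brk where "Brk Bv = (\<Sum>j\<in>V. Qj Bv j) - (\<Sum>\<alpha>\<in>F. ln (Z \<alpha>))"

lemma factor_term:
  assumes fe: "feasible V F E d \<Gamma> \<mu> Bv Bf" and aF: "\<alpha> \<in> F" and x: "x \<in> configs V E d \<alpha>"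
  shows "Bf \<alpha> x * C \<alpha> x + \<epsilon> * xlnx (Bf \<alpha> x) = \<epsilon> * (Bf \<alpha> x * ln (Bf \<alpha> x / bfs \<alpha> x)
     + Bf \<alpha> x * ((\<Sum>i\<in>nbV V E \<alpha>. ln (n i \<alpha> (x i))) - ln (Z \<alpha>)))"
proof (cases "Bf \<alpha> x = 0")
  case True
  then show ?thesis by (simp add: xlnx_def)
next
  case False
  then have pos: "Bf \<alpha> x > 0" using feasD2[OF fe aF x] by simp
  have wpos: "w \<alpha> x > 0" by (rule feas_support[OF fe aF x pos])
  have Zp: "Z \<alpha> > 0" by (rule Z_pos[OF aF])
  define L where "L = (\<Sum>i\<in>nbV V E \<alpha>. ln (n i \<alpha> (x i)))"
  have prodnz: "(\<Prod>i\<in>nbV V E \<alpha>. n i \<alpha> (x i)) \<noteq> 0" using wpos unfolding w_def by auto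
  then have "\<forall>i\<in>nbV V E \<alpha>. n i \<alpha> (x i) \<noteq> 0"
    using prod_zero_iff[OF fin_nbV[of \<alpha>], of "\<lambda>i. n i \<alpha> (x i)"] by metis
  then have lnprod: "ln (\<Prod>i\<in>nbV V E \<alpha>. n i \<alpha> (x i)) = L" unfolding L_def
    using fin_nbV by (intro ln_prod) auto
  have lnw: "ln (w \<alpha> x) = - C \<alpha> x / \<epsilon> + L"
    unfolding w_def using prodnz lnprod by (simp add: ln_mult)
  have bp: "bfs \<alpha> x = w \<alpha> x / Z \<alpha>" by (rule bfs_eq)
  have "ln (Bf \<alpha> x / bfs \<alpha> x) = ln (Bf \<alpha> x) - ln (w \<alpha> x) + ln (Z \<alpha>)"
    using pos wpos Zp bp by (simp add: ln_div ln_mult)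
  then have lb: "ln (Bf \<alpha> x / bfs \<alpha> x) = ln (Bf \<alpha> x) + C \<alpha> x / \<epsilon> - L + ln (Z \<alpha>)"
    using lnw by simp
  have e1: "Bf \<alpha> x * ln (Bf \<alpha> x / bfs \<alpha> x) + Bf \<alpha> x * (L - ln (Z \<alpha>))
      = Bf \<alpha> x * ln (Bf \<alpha> x) + Bf \<alpha> x * (C \<alpha> x / \<epsilon>)"
    unfolding lb by (simp add: algebra_simps)
  have e2: "\<epsilon> * (Bf \<alpha> x * (C \<alpha> x / \<epsilon>)) = Bf \<alpha> x * C \<alpha> x" using eps by simp
  have "\<epsilon> * (Bf \<alpha> x * ln (Bf \<alpha> x / bfs \<alpha> x) + Bf \<alpha> x * (L - ln (Z \<alpha>)))
      = \<epsilon> * (Bf \<alpha> x * ln (Bf \<alpha> x)) + Bf \<alpha> x * C \<alpha> x"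
    unfolding e1 distrib_left e2 ..
  then show ?thesis using False unfolding L_def xlnx_def by simp
qed

lemma factor_sum:
  assumes fe: "feasible V F E d \<Gamma> \<mu> Bv Bf" and aF: "\<alpha> \<in> F"
  shows "(\<Sum>x\<in>configs V E d \<alpha>. Bf \<alpha> x * ((\<Sum>i\<in>nbV V E \<alpha>. ln (n i \<alpha> (x i))) - ln (Z \<alpha>)))
     = (\<Sum>i\<in>nbV V E \<alpha>. T Bv \<alpha> i) - ln (Z \<alpha>)"
proof -
  have "(\<Sum>x\<in>configs V E d \<alpha>. Bf \<alpha> x * ((\<Sum>i\<in>nbV V E \<alpha>. ln (n i \<alpha> (x i))) - ln (Z \<alpha>)))
     = (\<Sum>x\<in>configs V E d \<alpha>. \<Sum>i\<in>nbV V E \<alpha>. Bf \<alpha> x * ln (n i \<alpha> (x i)))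
       - (\<Sum>x\<in>configs V E d \<alpha>. Bf \<alpha> x) * ln (Z \<alpha>)"
    by (simp add: right_diff_distrib sum_subtractf sum_distrib_left sum_distrib_right)
  also have "(\<Sum>x\<in>configs V E d \<alpha>. Bf \<alpha> x) = 1" by (rule feasD5[OF fe aF])
  also have "(\<Sum>x\<in>configs V E d \<alpha>. \<Sum>i\<in>nbV V E \<alpha>. Bf \<alpha> x * ln (n i \<alpha> (x i)))
      = (\<Sum>i\<in>nbV V E \<alpha>. \<Sum>x\<in>configs V E d \<alpha>. Bf \<alpha> x * ln (n i \<alpha> (x i)))"
    by (rule sum.swap)
  also have "\<dots> = (\<Sum>i\<in>nbV V E \<alpha>. T Bv \<alpha> i)"
  proof (rule sum.cong[OF refl])
    fix i assume "i \<in> nbV V E \<alpha>"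
    then have e: "(i,\<alpha>) \<in> E" using nbV_iff by blast
    have "(\<Sum>x\<in>configs V E d \<alpha>. Bf \<alpha> x * ln (n i \<alpha> (x i)))
        = (\<Sum>a<d i. \<Sum>x\<in>configs_fix V E d \<alpha> i a. Bf \<alpha> x * ln (n i \<alpha> (x i)))"
      by (rule sum_configs_group[OF e])
    also have "\<dots> = (\<Sum>a<d i. (\<Sum>x\<in>configs_fix V E d \<alpha> i a. Bf \<alpha> x) * ln (n i \<alpha> a))"
      unfolding sum_distrib_right configs_fix_def by simp
    also have "\<dots> = T Bv \<alpha> i" unfolding T_def using feasD4[OF fe e] by simp
    finally show "(\<Sum>x\<in>configs V E d \<alpha>. Bf \<alpha> x * ln (n i \<alpha> (x i))) = T Bv \<alpha> i" .
  qed
  finally show ?thesis by simp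
qed

lemma var_term:
  assumes fe: "feasible V F E d \<Gamma> \<mu> Bv Bf" and jV: "j \<in> V" and a: "a < d j"
  shows "(real (card (nbF F E j)) - 1) * xlnx (Bv j a) =
    (real (card (nbF F E j)) - 1) * (Bv j a * ln (Bv j a / bvs j a) + Bv j a * ln (bvs j a))"
proof (cases "j \<in> \<Gamma>")
  case True
  then show ?thesis using card_Gamma by simp
next
  case False
  have bp: "bvs j a > 0" using bvs_pos[OF jV False a] .
  show ?thesis
  proof (cases "Bv j a = 0")
    case True
    then show ?thesis by (simp add: xlnx_def)
  next
    case F2: False
    then have "Bv j a > 0" using feasD1[OF fe jV a] by simp
    then have "ln (Bv j a / bvs j a) = ln (Bv j a) - ln (bvs j a)" using bp by (simp add: ln_div)
    then have hl: "ln (Bv j a) = ln (Bv j a / bvs j a) + ln (bvs j a)" by simp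
    have "xlnx (Bv j a) = Bv j a * (ln (Bv j a / bvs j a) + ln (bvs j a))"
      using F2 hl unfolding xlnx_def by simp
    then have "xlnx (Bv j a) = Bv j a * ln (Bv j a / bvs j a) + Bv j a * ln (bvs j a)"
      by (simp only: distrib_left)
    then show ?thesis by simp
  qed
qed

lemma bethe_identity:
  assumes fe: "feasible V F E d \<Gamma> \<mu> Bv Bf"
  shows "bethe V F E d \<epsilon> C Bv Bf = \<epsilon> * ((\<Sum>\<alpha>\<in>F. DF Bf \<alpha>)
     - (\<Sum>j\<in>V. (real (card (nbF F E j)) - 1) * DV Bv j) + Brk Bv)"
proof -
  have A1: "(\<Sum>\<alpha>\<in>F. \<Sum>x\<in>configs V E d \<alpha>. Bf \<alpha> x * C \<alpha> x) + \<epsilon> * (\<Sum>\<alpha>\<in>F. \<Sum>x\<in>configs V E d \<alpha>. xlnx (Bf \<alpha> x))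
     = \<epsilon> * ((\<Sum>\<alpha>\<in>F. DF Bf \<alpha>) + (\<Sum>\<alpha>\<in>F. \<Sum>i\<in>nbV V E \<alpha>. T Bv \<alpha> i) - (\<Sum>\<alpha>\<in>F. ln (Z \<alpha>)))"
  proof -
    have "(\<Sum>\<alpha>\<in>F. \<Sum>x\<in>configs V E d \<alpha>. Bf \<alpha> x * C \<alpha> x) + \<epsilon> * (\<Sum>\<alpha>\<in>F. \<Sum>x\<in>configs V E d \<alpha>. xlnx (Bf \<alpha> x))
      = (\<Sum>\<alpha>\<in>F. \<Sum>x\<in>configs V E d \<alpha>. Bf \<alpha> x * C \<alpha> x + \<epsilon> * xlnx (Bf \<alpha> x))"
      by (simp add: sum.distrib sum_distrib_left)
    also have "\<dots> = (\<Sum>\<alpha>\<in>F. \<epsilon> * (DF Bf \<alpha> + ((\<Sum>i\<in>nbV V E \<alpha>. T Bv \<alpha> i) - ln (Z \<alpha>))))"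
    proof (rule sum.cong[OF refl])
      fix \<alpha> assume aF: "\<alpha> \<in> F"
      have "(\<Sum>x\<in>configs V E d \<alpha>. Bf \<alpha> x * C \<alpha> x + \<epsilon> * xlnx (Bf \<alpha> x))
         = (\<Sum>x\<in>configs V E d \<alpha>. \<epsilon> * (Bf \<alpha> x * ln (Bf \<alpha> x / bfs \<alpha> x)
             + Bf \<alpha> x * ((\<Sum>i\<in>nbV V E \<alpha>. ln (n i \<alpha> (x i))) - ln (Z \<alpha>))))"
        using factor_term[OF fe aF] by (intro sum.cong) auto
      also have "\<dots> = \<epsilon> * (\<Sum>x\<in>configs V E d \<alpha>. (Bf \<alpha> x * ln (Bf \<alpha> x / bfs \<alpha> x)
             + Bf \<alpha> x * ((\<Sum>i\<in>nbV V E \<alpha>. ln (n i \<alpha> (x i))) - ln (Z \<alpha>))))"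
        by (rule sum_distrib_left[symmetric])
      also have "\<dots> = \<epsilon> * (DF Bf \<alpha> + (\<Sum>x\<in>configs V E d \<alpha>. Bf \<alpha> x * ((\<Sum>i\<in>nbV V E \<alpha>. ln (n i \<alpha> (x i))) - ln (Z \<alpha>))))"
        unfolding DF_def by (rule arg_cong[where f="\<lambda>t. \<epsilon> * t"], rule sum.distrib)
      also have "\<dots> = \<epsilon> * (DF Bf \<alpha> + ((\<Sum>i\<in>nbV V E \<alpha>. T Bv \<alpha> i) - ln (Z \<alpha>)))"
        using factor_sum[OF fe aF] by simp
      finally show "(\<Sum>x\<in>configs V E d \<alpha>. Bf \<alpha> x * C \<alpha> x + \<epsilon> * xlnx (Bf \<alpha> x)) = \<epsilon> * (DF Bf \<alpha> + ((\<Sum>i\<in>nbV V E \<alpha>. T Bv \<alpha> i) - ln (Z \<alpha>)))" .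
    qed
    also have "\<dots> = \<epsilon> * ((\<Sum>\<alpha>\<in>F. DF Bf \<alpha>) + (\<Sum>\<alpha>\<in>F. \<Sum>i\<in>nbV V E \<alpha>. T Bv \<alpha> i) - (\<Sum>\<alpha>\<in>F. ln (Z \<alpha>)))"
      by (simp add: sum_distrib_left[symmetric] sum.distrib sum_subtractf)
    finally show ?thesis .
  qed
  have A2: "(\<Sum>j\<in>V. (real (card (nbF F E j)) - 1) * (\<Sum>a<d j. xlnx (Bv j a)))
     = (\<Sum>j\<in>V. (real (card (nbF F E j)) - 1) * DV Bv j) + (\<Sum>j\<in>V. (real (card (nbF F E j)) - 1) * (\<Sum>a<d j. Bv j a * ln (bvs j a)))"
  proof -
    have "(\<Sum>j\<in>V. (real (card (nbF F E j)) - 1) * (\<Sum>a<d j. xlnx (Bv j a)))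
       = (\<Sum>j\<in>V. (real (card (nbF F E j)) - 1) * DV Bv j + (real (card (nbF F E j)) - 1) * (\<Sum>a<d j. Bv j a * ln (bvs j a)))"
    proof (rule sum.cong[OF refl])
      fix j assume jV: "j \<in> V"
      have "(real (card (nbF F E j)) - 1) * (\<Sum>a<d j. xlnx (Bv j a))
          = (\<Sum>a<d j. (real (card (nbF F E j)) - 1) * xlnx (Bv j a))" by (simp add: sum_distrib_left)
      also have "\<dots> = (\<Sum>a<d j. (real (card (nbF F E j)) - 1) * (Bv j a * ln (Bv j a / bvs j a) + Bv j a * ln (bvs j a)))"
        using var_term[OF fe jV] by (intro sum.cong) auto
      also have "\<dots> = (real (card (nbF F E j)) - 1) * DV Bv j + (real (card (nbF F E j)) - 1) * (\<Sum>a<d j. Bv j a * ln (bvs j a))"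
        unfolding DV_def by (simp add: sum.distrib sum_distrib_left distrib_left)
      finally show "(real (card (nbF F E j)) - 1) * (\<Sum>a<d j. xlnx (Bv j a)) = (real (card (nbF F E j)) - 1) * DV Bv j + (real (card (nbF F E j)) - 1) * (\<Sum>a<d j. Bv j a * ln (bvs j a))" .
    qed
    then show ?thesis by (simp add: sum.distrib)
  qed
  have A3: "(\<Sum>\<alpha>\<in>F. \<Sum>i\<in>nbV V E \<alpha>. T Bv \<alpha> i) = (\<Sum>j\<in>V. \<Sum>\<alpha>\<in>nbF F E j. T Bv \<alpha> j)"
    unfolding nbV_def nbF_def using finF finV by (rule sum.swap_restrict)
  have A4: "Brk Bv = (\<Sum>j\<in>V. \<Sum>\<alpha>\<in>nbF F E j. T Bv \<alpha> j)
      - (\<Sum>j\<in>V. (real (card (nbF F E j)) - 1) * (\<Sum>a<d j. Bv j a * ln (bvs j a))) - (\<Sum>\<alpha>\<in>F. ln (Z \<alpha>))"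
    unfolding Brk_def Qj_def by (simp add: sum_subtractf)
  show ?thesis unfolding bethe_def by (rule alg_helper[OF A1 A2 A3 A4])
qed

end


context bp begin

lemma per_a:
  assumes jV: "j \<in> V" and jG: "j \<notin> \<Gamma>" and a: "a < d j"
  shows "(\<Sum>\<alpha>\<in>nbF F E j. ln (n j \<alpha> a)) - (real (card (nbF F E j)) - 1) * ln (bvs j a) = kap j"
proof -
  let ?N = "nbF F E j"
  define Lb where "Lb \<beta> = ln (m \<beta> j a)" for \<beta>
  have mpos: "\<beta> \<in> ?N \<Longrightarrow> m \<beta> j a > 0" for \<beta> using m_pos a nbF_iff by blast
  have h1: "ln (n j \<alpha> a) = ln (cn j \<alpha>) + (\<Sum>\<beta>\<in>?N-{\<alpha>}. Lb \<beta>)" if al: "\<alpha> \<in> ?N" for \<alpha>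
  proof -
    have e: "(j,\<alpha>) \<in> E" using al nbF_iff by blast
    have pp: "(\<Prod>\<beta>\<in>?N-{\<alpha>}. m \<beta> j a) > 0" using mpos by (intro prod_pos) auto
    have "n j \<alpha> a = cn j \<alpha> * (\<Prod>\<beta>\<in>?N-{\<alpha>}. m \<beta> j a)" using cn(2)[OF e a] jG by simp
    moreover have "ln (\<Prod>\<beta>\<in>?N-{\<alpha>}. m \<beta> j a) = (\<Sum>\<beta>\<in>?N-{\<alpha>}. Lb \<beta>)"
      unfolding Lb_def using fin_nbF mpos by (intro ln_prod) (auto simp: less_imp_neq[symmetric])
    ultimately show ?thesis using pp cn(1)[OF e] by (simp add: ln_mult)
  qed
  have h2: "ln (bvs j a) = (\<Sum>\<beta>\<in>?N. Lb \<beta>) - ln (SP j)"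
  proof -
    have "ln (P j a) = (\<Sum>\<beta>\<in>?N. Lb \<beta>)"
      unfolding Lb_def P_def using fin_nbF mpos by (intro ln_prod) (auto simp: less_imp_neq[symmetric])
    then show ?thesis using P_pos[OF a] SP_pos[OF jV] jG unfolding bvs_eq by (simp add: ln_div)
  qed
  have h3: "(\<Sum>\<alpha>\<in>?N. ln (n j \<alpha> a)) = (\<Sum>\<alpha>\<in>?N. ln (cn j \<alpha>)) + (real (card ?N) * (\<Sum>\<beta>\<in>?N. Lb \<beta>) - (\<Sum>\<beta>\<in>?N. Lb \<beta>))"
  proof -
    have "(\<Sum>\<alpha>\<in>?N. ln (n j \<alpha> a)) = (\<Sum>\<alpha>\<in>?N. ln (cn j \<alpha>) + ((\<Sum>\<beta>\<in>?N. Lb \<beta>) - Lb \<alpha>))"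
      using h1 sum_diff1[OF fin_nbF[of j], of Lb] by (intro sum.cong) auto
    also have "\<dots> = (\<Sum>\<alpha>\<in>?N. ln (cn j \<alpha>)) + (real (card ?N) * (\<Sum>\<beta>\<in>?N. Lb \<beta>) - (\<Sum>\<beta>\<in>?N. Lb \<beta>))"
      by (simp add: sum.distrib sum_subtractf)
    finally show ?thesis .
  qed
  show ?thesis unfolding h3 h2 kap_def by (simp add: algebra_simps)
qed

lemma Qj_nonG:
  assumes jV: "j \<in> V" and jG: "j \<notin> \<Gamma>" and s: "(\<Sum>a<d j. X j a) = 1"
  shows "Qj X j = kap j"
proof -
  have "(\<Sum>\<alpha>\<in>nbF F E j. T X \<alpha> j) = (\<Sum>a<d j. X j a * (\<Sum>\<alpha>\<in>nbF F E j. ln (n j \<alpha> a)))"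
    unfolding T_def by (subst sum.swap) (simp add: sum_distrib_left)
  moreover have "(real (card (nbF F E j)) - 1) * (\<Sum>a<d j. X j a * ln (bvs j a))
      = (\<Sum>a<d j. X j a * ((real (card (nbF F E j)) - 1) * ln (bvs j a)))"
    by (simp add: sum_distrib_left algebra_simps)
  ultimately have "Qj X j = (\<Sum>a<d j. X j a * ((\<Sum>\<alpha>\<in>nbF F E j. ln (n j \<alpha> a)) - (real (card (nbF F E j)) - 1) * ln (bvs j a)))"
    unfolding Qj_def by (simp add: sum_subtractf right_diff_distrib)
  also have "\<dots> = (\<Sum>a<d j. X j a * kap j)" using per_a[OF jV jG] by (intro sum.cong) auto
  also have "\<dots> = kap j" using s by (simp add: sum_distrib_right[symmetric])
  finally show ?thesis .
qed

lemma Qj_G: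
  assumes fe: "feasible V F E d \<Gamma> \<mu> Bv Bf" and jG: "j \<in> \<Gamma>"
  shows "Qj Bv j = Qj bvs j"
proof -
  have eq: "a < d j \<Longrightarrow> Bv j a = bvs j a" for a using feasD3[OF fe jG] jG unfolding bvs_eq by simp
  then have "T Bv \<alpha> j = T bvs \<alpha> j" for \<alpha> unfolding T_def by (intro sum.cong) auto
  moreover have "(\<Sum>a<d j. Bv j a * ln (bvs j a)) = (\<Sum>a<d j. bvs j a * ln (bvs j a))"
    using eq by (intro sum.cong) auto
  ultimately show ?thesis unfolding Qj_def by simp
qed

lemma Brk_eq:
  assumes fe: "feasible V F E d \<Gamma> \<mu> Bv Bf"
  shows "Brk Bv = Brk bvs"
proof -
  have fe2: "feasible V F E d \<Gamma> \<mu> bvs bfs" by (rule feasible_bp)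
  have "Qj Bv j = Qj bvs j" if jV: "j \<in> V" for j
  proof (cases "j \<in> \<Gamma>")
    case True
    then show ?thesis using Qj_G[OF fe] by blast
  next
    case False
    then show ?thesis using Qj_nonG[OF jV False] feas_sumBv[OF fe jV] feas_sumBv[OF fe2 jV] by simp
  qed
  then show ?thesis unfolding Brk_def by simp
qed

lemma main:
  assumes fe: "feasible V F E d \<Gamma> \<mu> Bv Bf"
  shows "bethe V F E d \<epsilon> C bvs bfs \<le> bethe V F E d \<epsilon> C Bv Bf"
proof -
  have fe2: "feasible V F E d \<Gamma> \<mu> bvs bfs" by (rule feasible_bp)
  have "DF bfs \<alpha> = 0" for \<alpha> unfolding DF_def by (intro sum.neutral) auto
  moreover have "DV bvs j = 0" for j unfolding DV_def by (intro sum.neutral) auto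
  ultimately have b2: "bethe V F E d \<epsilon> C bvs bfs = \<epsilon> * Brk bvs"
    using bethe_identity[OF fe2] by simp
  have "0 \<le> (\<Sum>\<alpha>\<in>F. DF Bf \<alpha>) - (\<Sum>j\<in>V. (real (card (nbF F E j)) - 1) * DV Bv j)"
    using DF_DV_ineq[OF fe] by simp
  then have "\<epsilon> * Brk Bv \<le> \<epsilon> * ((\<Sum>\<alpha>\<in>F. DF Bf \<alpha>) - (\<Sum>j\<in>V. (real (card (nbF F E j)) - 1) * DV Bv j) + Brk Bv)"
    using eps by (simp add: mult_left_mono)
  then show ?thesis using b2 bethe_identity[OF fe] Brk_eq[OF fe] by simp
qed

end

theorem theorem1:
  fixes V :: "'v set" and F :: "'f set" and E :: "('v \<times> 'f) set"
    and d :: "'v \<Rightarrow> nat" and \<epsilon> :: real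
    and C :: "'f \<Rightarrow> ('v \<Rightarrow> nat) \<Rightarrow> real"
    and \<Gamma> :: "'v set" and \<mu> :: "'v \<Rightarrow> nat \<Rightarrow> real"
    and m :: "'f \<Rightarrow> 'v \<Rightarrow> nat \<Rightarrow> real" and n :: "'v \<Rightarrow> 'f \<Rightarrow> nat \<Rightarrow> real"
  assumes tree: "factor_tree V F E"
    and F_ne: "F \<noteq> {}"
    and d_pos: "\<forall>j\<in>V. d j > 0"
    and eps: "\<epsilon> > 0"
    and Gamma_sub: "\<Gamma> \<subseteq> V"
    and Gamma_leaf: "\<forall>j\<in>\<Gamma>. card (nbF F E j) = 1"
    and mu_nonneg: "\<forall>j\<in>\<Gamma>. \<forall>a<d j. \<mu> j a \<ge> 0"
    and mu_sum: "\<forall>j\<in>\<Gamma>. (\<Sum>a<d j. \<mu> j a) = 1"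
    and m_pos: "\<forall>(j, \<alpha>)\<in>E. \<forall>a<d j. m \<alpha> j a > 0"
    and n_nonneg: "\<forall>(j, \<alpha>)\<in>E. \<forall>a<d j. n j \<alpha> a \<ge> 0"
    and fix_m: "\<forall>(j, \<alpha>)\<in>E. \<exists>c>0. \<forall>a<d j.
        m \<alpha> j a = c * (\<Sum>x\<in>configs_fix V E d \<alpha> j a.
                          exp (- C \<alpha> x / \<epsilon>) * (\<Prod>i\<in>nbV V E \<alpha> - {j}. n i \<alpha> (x i)))"
    and fix_n: "\<forall>(j, \<alpha>)\<in>E. j \<notin> \<Gamma> \<longrightarrow> (\<exists>c>0. \<forall>a<d j.
        n j \<alpha> a = c * (\<Prod>\<beta>\<in>nbF F E j - {\<alpha>}. m \<beta> j a))"
    and fix_n_Gamma: "\<forall>(j, \<alpha>)\<in>E. j \<in> \<Gamma> \<longrightarrow> (\<exists>c>0. \<forall>a<d j.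
        n j \<alpha> a = c * (\<mu> j a * inverse (m \<alpha> j a)))"
  shows "feasible V F E d \<Gamma> \<mu> (bp_var_belief F E d \<Gamma> \<mu> m) (bp_factor_belief V E d \<epsilon> C n)
       \<and> (\<forall>Bv Bf. feasible V F E d \<Gamma> \<mu> Bv Bf \<longrightarrow>
            bethe V F E d \<epsilon> C (bp_var_belief F E d \<Gamma> \<mu> m) (bp_factor_belief V E d \<epsilon> C n)
              \<le> bethe V F E d \<epsilon> C Bv Bf)"
  proof -
  interpret bp V F E d \<epsilon> C \<Gamma> \<mu> m n
    using assms by (unfold_locales) blast+
  show ?thesis using feasible_bp main by blast
qed

end
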